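(* Let $G$ be a finite group acting linearly by orthogonal transformations on $\mathbb R^n$, freely on $\mathbb S^{n-1}$; let $v_0\in\mathbb S^{n-1}$ be such that $\mathcal V=G\cdot v_0$ spans $\mathbb R^n$, and let $\mathcal P=\operatorname{conv}(\mathcal V)$ (the orbit polytope). Then there exists a system of representatives $F_1,\dots,F_r$ of the $G$-orbits on the set of facets of $\mathcal P$ such that $\mathcal D=F_1\cup\cdots\cup F_r$ is a fundamental domain for the action of $G$ on the boundary $\partial\mathcal P$. Consequently $\{x/|x|: x\in\mathcal D\}$ is a fundamental domain for the action of $G$ on $\mathbb S^{n-1}$.
   Context: A facet is a face of codimension one in $\mathcal P$. For a group $G$ acting on a space $X$, a fundamental domain is a connected closed subset $\mathcal D\subseteq X$ with $X=\bigcup_{g\in G}g\mathcal D$ and such that $g\mathcal D\cap g'\mathcal D$ has empty interior for all $g\neq g'$ in $G$. ($\partial\mathcal P$ is homeomorphic to $\mathbb S^{n-1}$ via $x\mapsto x/|x|$.) *)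

theory Defs
  imports "HOL-Analysis.Analysis"
begin

definition fundamental_domain :: "('a::topological_space \<Rightarrow> 'a) set \<Rightarrow> 'a set \<Rightarrow> 'a set \<Rightarrow> bool" where
  "fundamental_domain G X D \<longleftrightarrow>
     D \<subseteq> X \<and> connected D \<and> closedin (top_of_set X) D \<and>
     X = (\<Union>g\<in>G. g ` D) \<and>
     (\<forall>g\<in>G. \<forall>g'\<in>G. g \<noteq> g' \<longrightarrow> (top_of_set X) interior_of (g ` D \<inter> g' ` D) = {})"

definition facet_orbit_representatives :: "('a::euclidean_space \<Rightarrow> 'a) set \<Rightarrow> 'a set \<Rightarrow> 'a set set \<Rightarrow> bool" where
  "facet_orbit_representatives G P R \<longleftrightarrow>
     (\<forall>F\<in>R. F facet_of P) \<and>
     (\<forall>F. F facet_of P \<longrightarrow> (\<exists>!F'. F' \<in> R \<and> (\<exists>g\<in>G. F = g ` F')))"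

end

theory Submission
  imports Defs
begin


locale orb =
  fixes G :: "('a::euclidean_space \<Rightarrow> 'a) set" and v0 :: 'a
  assumes finG: "finite G"
    and idG: "id \<in> G"
    and compG: "\<forall>g\<in>G. \<forall>h\<in>G. g \<circ> h \<in> G"
    and invG: "\<forall>g\<in>G. \<exists>h\<in>G. g \<circ> h = id \<and> h \<circ> g = id"
    and orthG: "\<forall>g\<in>G. orthogonal_transformation g"
    and freeG: "\<forall>g\<in>G. \<forall>x\<in>sphere 0 1. g x = x \<longrightarrow> g = id"
    and v0s: "v0 \<in> sphere 0 1"
    and affS: "affine hull ((\<lambda>g. g v0) ` G) = UNIV"
begin

definition "S = (\<lambda>g. g v0) ` G"
definition "P = convex hull S"

lemma lin: "g \<in> G \<Longrightarrow> linear g"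
  using orthG orthogonal_transformation_linear by blast
lemma injg: "g \<in> G \<Longrightarrow> inj g"
  using orthG orthogonal_transformation_inj by blast
lemma normg: "g \<in> G \<Longrightarrow> norm (g x) = norm x"
  using orthG orthogonal_transformation_norm by blast

lemma finS: "finite S" unfolding S_def using finG by simp
lemma polyP: "polytope P" unfolding P_def by (simp add: finS polytope_convex_hull)
lemma compP: "compact P" using polyP polytope_imp_compact by blast
lemma convP: "convex P" unfolding P_def by simp
lemma affP: "affine hull P = UNIV" unfolding P_def S_def using affS by simp
lemma affdimP: "aff_dim P = int DIM('a)"
  by (metis affP aff_dim_UNIV aff_dim_affine_hull)
lemma frontP: "frontier P = \<Union> {F. F facet_of P}"
  using rel_frontier_of_polyhedron[OF polytope_imp_polyhedron[OF polyP]]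
    rel_frontier_frontier[OF affP] by simp
lemma rintP: "rel_interior P = interior P" using rel_interior_interior[OF affP] .

lemma gS: assumes "g \<in> G" shows "g ` S = S"
proof
  show "g ` S \<subseteq> S"
  proof
    fix x assume "x \<in> g ` S"
    then obtain h where h: "h \<in> G" "x = g (h v0)" unfolding S_def by auto
    then have "g \<circ> h \<in> G" using compG assms by blast
    moreover have "x = (g \<circ> h) v0" using h by simp
    ultimately show "x \<in> S" unfolding S_def by blast
  qed
  show "S \<subseteq> g ` S"
  proof
    fix s assume "s \<in> S"
    then obtain h where h: "h \<in> G" "s = h v0" unfolding S_def by auto
    obtain k where k: "k \<in> G" "g \<circ> k = id" using invG assms by blast
    have "k \<circ> h \<in> G" using compG h k by blast
    then have "(k \<circ> h) v0 \<in> S" unfolding S_def by blast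
    moreover have "s = g ((k \<circ> h) v0)" using k h by (metis comp_apply id_apply)
    ultimately show "s \<in> g ` S" by blast
  qed
qed

lemma gP: "g \<in> G \<Longrightarrow> g ` P = P"
  unfolding P_def by (simp add: convex_hull_linear_image lin gS)

lemma facet_img: assumes g: "g \<in> G" and F: "F facet_of P" shows "g ` F facet_of P"
proof -
  have lf: "linear g" "inj g" using lin[OF g] injg[OF g] by auto
  have "g ` F face_of g ` P"
    using face_of_linear_image[OF lf] facet_of_imp_face_of[OF F] by blast
  then have f: "g ` F face_of P" using gP[OF g] by simp
  have a: "aff_dim (g ` F) = aff_dim F" using lf by simp
  have "g ` F \<noteq> {}" using F by (auto simp: facet_of_def)
  then show ?thesis using f a F by (simp add: facet_of_def)
qed

lemma ginv: assumes "g \<in> G" obtains k where "k \<in> G" "g \<circ> k = id" "k \<circ> g = id"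
  using invG assms by blast

lemma nontriv: "\<exists>g\<in>G. g \<noteq> id"
proof (rule ccontr)
  assume "\<not> ?thesis"
  then have "G = {id}" using idG by auto
  then have "affine hull {v0} = UNIV" using affS by simp
  then have "-v0 = v0" by (metis UNIV_I affine_hull_sing singletonD)
  then have "v0 + v0 = 0" by (metis add.right_inverse)
  then have "v0 = 0" by (metis scaleR_2 scaleR_eq_0_iff zero_neq_numeral)
  then show False using v0s by simp
qed

lemma fixed_sum: assumes "h \<in> G" shows "h (\<Sum>g\<in>G. g v0) = (\<Sum>g\<in>G. g v0)"
proof -
  obtain k where k: "k \<in> G" "h \<circ> k = id" "k \<circ> h = id" using ginv assms by blast
  have inj: "inj_on ((\<circ>) h) G"
  proof (rule inj_onI)
    fix x y assume "h \<circ> x = h \<circ> y"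
    then have "k \<circ> (h \<circ> x) = k \<circ> (h \<circ> y)" by simp
    then show "x = y" using k(3) by (simp add: o_assoc)
  qed
  have im: "(\<circ>) h ` G = G"
  proof
    show "(\<circ>) h ` G \<subseteq> G" using compG assms by auto
    show "G \<subseteq> (\<circ>) h ` G"
    proof
      fix g assume "g \<in> G"
      then have "k \<circ> g \<in> G" "g = h \<circ> (k \<circ> g)" using compG k by (auto simp: o_assoc)
      then show "g \<in> (\<circ>) h ` G" by blast
    qed
  qed
  have "h (\<Sum>g\<in>G. g v0) = (\<Sum>g\<in>G. (h \<circ> g) v0)"
    using linear_sum[OF lin[OF assms]] by simp
  also have "\<dots> = (\<Sum>g\<in>(\<circ>) h ` G. g v0)"
    using sum.reindex[OF inj, of "\<lambda>g. g v0"] by simp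
  finally show ?thesis using im by simp
qed

lemma sum0: "(\<Sum>g\<in>G. g v0) = 0"
proof (rule ccontr)
  define c where "c = (\<Sum>g\<in>G. g v0)"
  assume "(\<Sum>g\<in>G. g v0) \<noteq> 0"
  then have c: "c \<noteq> 0" using c_def by simp
  have "\<forall>h\<in>G. h = id"
  proof
    fix h assume h: "h \<in> G"
    have "h (c /\<^sub>R norm c) = c /\<^sub>R norm c"
      using fixed_sum[OF h] linear_cmul[OF lin[OF h]] c_def by simp
    moreover have "c /\<^sub>R norm c \<in> sphere 0 1" using c by simp
    ultimately show "h = id" using freeG h by blast
  qed
  then show False using nontriv by blast
qed

lemma zero_int: "0 \<in> interior P"
proof (rule ccontr)
  assume "0 \<notin> interior P"
  then have n: "0 \<notin> rel_interior P" using rintP by simp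
  have "(\<Sum>g\<in>G. (1 / real (card G)) *\<^sub>R g v0) \<in> P"
  proof (rule convex_sum[OF finG convP])
    have "card G > 0" using finG idG card_gt_0_iff by blast
    then show "(\<Sum>i\<in>G. 1 / real (card G)) = 1" by simp
    show "\<And>i. i \<in> G \<Longrightarrow> 0 \<le> 1 / real (card G)" by simp
    show "\<And>i. i \<in> G \<Longrightarrow> i v0 \<in> P" unfolding P_def S_def by (simp add: hull_inc)
  qed
  moreover have "(\<Sum>g\<in>G. (1 / real (card G)) *\<^sub>R g v0) = (1 / real (card G)) *\<^sub>R (\<Sum>g\<in>G. g v0)"
    by (rule scaleR_sum_right[symmetric])
  ultimately have "0 \<in> P" using sum0 by simp
  then have c: "0 \<in> closure P" using closure_subset by blast
  obtain a where a: "a \<noteq> 0" "\<And>y. y \<in> closure P \<Longrightarrow> a \<bullet> 0 \<le> a \<bullet> y"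
      "\<And>y. y \<in> rel_interior P \<Longrightarrow> a \<bullet> 0 < a \<bullet> y"
    using supporting_hyperplane_relative_frontier[OF convP c n] by blast
  have nn: "0 \<le> a \<bullet> g v0" if g: "g \<in> G" for g
  proof -
    have "g v0 \<in> P" unfolding P_def S_def using g by (simp add: hull_inc)
    then have "g v0 \<in> closure P" using closure_subset by blast
    then show ?thesis using a(2) by simp
  qed
  have "(\<Sum>g\<in>G. a \<bullet> g v0) = a \<bullet> (\<Sum>g\<in>G. g v0)" by (rule inner_sum_right[symmetric])
  then have "(\<Sum>g\<in>G. a \<bullet> g v0) = 0" using sum0 by simp
  then have z: "\<forall>g\<in>G. a \<bullet> g v0 = 0" using sum_nonneg_eq_0_iff[of G "\<lambda>g. a \<bullet> g v0"] finG nn by simp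
  have "S \<subseteq> {x. a \<bullet> x = 0}" using z unfolding S_def by blast
  then have h: "affine hull S \<subseteq> {x. a \<bullet> x = 0}"
    by (rule hull_minimal) (rule affine_hyperplane)
  have "a \<in> affine hull S" using affS unfolding S_def by simp
  then have "a \<bullet> a = 0" using h by blast
  then show False using a by simp
qed

lemma front_sub: "frontier P \<subseteq> P"
  using compP by (simp add: compact_imp_closed frontier_subset_closed)

lemma front_ne0: "x \<in> frontier P \<Longrightarrow> x \<noteq> 0"
  using zero_int by (auto simp: frontier_def)

lemma ray_unique: assumes x: "x \<in> frontier P" and t: "t > 0" and tx: "t *\<^sub>R x \<in> frontier P"
  shows "t = 1"
proof -
  have x0: "x \<noteq> 0" using front_ne0 x by blast
  have cl: "closure P = P" using compP by (simp add: compact_imp_closed)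
  have seg: "\<And>y. y \<in> frontier P \<Longrightarrow> open_segment 0 y \<subseteq> interior P"
    using in_interior_closure_convex_segment[OF convP zero_int] front_sub cl by auto
  have nint: "\<And>y. y \<in> frontier P \<Longrightarrow> y \<notin> interior P" by (auto simp: frontier_def)
  show ?thesis
  proof (rule ccontr)
    assume "t \<noteq> 1"
    then consider "t < 1" | "t > 1" by linarith
    then show False
    proof cases
      case 1
      have "t *\<^sub>R x \<in> open_segment 0 x" using 1 t x0 by (auto simp: in_segment)
      then show False using seg[OF x] nint[OF tx] by blast
    next
      case 2
      have "x = (1/t) *\<^sub>R (t *\<^sub>R x)" using t by simp
      moreover have "(1/t) *\<^sub>R (t *\<^sub>R x) \<in> open_segment 0 (t *\<^sub>R x)"
        using 2 t x0 by (auto simp: in_segment intro!: exI[of _ "1/t"])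
      ultimately show False using seg[OF tx] nint[OF x] by auto
    qed
  qed
qed

definition "phi = (\<lambda>x::'a. x /\<^sub>R norm x)"

lemma phi_inj: "inj_on phi (frontier P)"
proof (rule inj_onI)
  fix x y assume x: "x \<in> frontier P" and y: "y \<in> frontier P" and e: "phi x = phi y"
  have x0: "x \<noteq> 0" and y0: "y \<noteq> 0" using front_ne0 x y by auto
  define t where "t = norm y / norm x"
  have t: "t > 0" using x0 y0 t_def by simp
  have "y = norm y *\<^sub>R phi y" using y0 by (simp add: phi_def)
  also have "\<dots> = norm y *\<^sub>R phi x" using e by simp
  also have "\<dots> = t *\<^sub>R x" using x0 by (simp add: phi_def t_def divide_inverse_commute)
  finally have "y = t *\<^sub>R x" .
  then have "t = 1" using ray_unique[OF x t] y by simp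
  then show "x = y" using \<open>y = t *\<^sub>R x\<close> by simp
qed

lemma phi_surj: "phi ` frontier P = sphere 0 1"
proof
  show "phi ` frontier P \<subseteq> sphere 0 1" using front_ne0 by (auto simp: phi_def)
  show "sphere 0 1 \<subseteq> phi ` frontier P"
  proof
    fix u :: 'a assume u: "u \<in> sphere 0 1"
    then have u0: "u \<noteq> 0" by auto
    have "bounded P" using compP compact_imp_bounded by blast
    moreover have "0 \<in> rel_interior P" using zero_int rintP by simp
    moreover have "0 + u \<in> affine hull P" using affP by simp
    ultimately obtain d where d: "0 < d" "0 + d *\<^sub>R u \<in> rel_frontier P"
      using ray_to_rel_frontier[of P 0 u] u0 by blast
    then have "d *\<^sub>R u \<in> frontier P" using rel_frontier_frontier[OF affP] by simp
    moreover have "phi (d *\<^sub>R u) = u" using d u by (simp add: phi_def)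
    ultimately show "u \<in> phi ` frontier P" by (metis image_eqI)
  qed
qed

lemma phi_comm: assumes "g \<in> G" shows "phi (g x) = g (phi x)"
  unfolding phi_def using linear_cmul[OF lin[OF assms]] normg[OF assms] by simp

end


context orb begin

lemma facet_compact: "F facet_of P \<Longrightarrow> compact F"
  using face_of_imp_compact[OF convP compP] facet_of_imp_face_of by blast

lemma facet_front: "F facet_of P \<Longrightarrow> F \<subseteq> frontier P"
  using frontP by blast

lemma facet_eq: assumes F1: "F1 facet_of P" and F2: "F2 facet_of P"
  and ne: "F1 \<inter> rel_interior F2 \<noteq> {}" shows "F1 = F2"
proof -
  have "F2 \<subseteq> F1" using subset_of_face_of[OF facet_of_imp_face_of[OF F1] facet_of_imp_subset[OF F2] ne] .
  then have f: "F2 face_of F1"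
    using face_of_subset[OF facet_of_imp_face_of[OF F2] _ facet_of_imp_subset[OF F1]] by blast
  show ?thesis
  proof (rule ccontr)
    assume "F1 \<noteq> F2"
    then have "aff_dim F2 < aff_dim F1"
      using face_of_aff_dim_lt[OF face_of_imp_convex[OF facet_of_imp_face_of[OF F1]] f] by auto
    then show False using F1 F2 by (simp add: facet_of_def)
  qed
qed

lemma front_img: assumes g: "g \<in> G" shows "g ` frontier P \<subseteq> frontier P"
proof
  fix y assume "y \<in> g ` frontier P"
  then obtain x where x: "x \<in> frontier P" "y = g x" by blast
  then have "x \<in> \<Union> {F. F facet_of P}" using frontP by simp
  then obtain F where F: "F facet_of P" "x \<in> F" by blast
  have "g ` F facet_of P" using facet_img[OF g F(1)] .
  then have "g ` F \<subseteq> frontier P" by (rule facet_front)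
  then show "y \<in> frontier P" using x F by blast
qed

lemma facet_free: assumes h: "h \<in> G" and F: "F facet_of P" and hF: "h ` F = F"
  shows "h = id"
proof -
  have cS: "compact S" using finS finite_imp_compact by blast
  have Ff: "F face_of convex hull S" using facet_of_imp_face_of[OF F] unfolding P_def .
  obtain S' where S': "S' \<subseteq> S" "F = convex hull S'"
    by (rule face_of_convex_hull_subset[OF cS Ff])
  define V where "V = F \<inter> S"
  have finV: "finite V" unfolding V_def using finS by simp
  have "S' \<subseteq> F" unfolding S'(2) by (rule hull_subset)
  then have "S' \<subseteq> V" unfolding V_def using S'(1) by simp
  moreover have "S' \<noteq> {}" using F S' by (auto simp: facet_of_def)
  ultimately have V0: "V \<noteq> {}" by blast
  have hV: "h ` V = V"
  proof (rule endo_inj_surj[OF finV])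
    have "h ` V \<subseteq> h ` F \<inter> h ` S" unfolding V_def by (rule image_Int_subset)
    then show "h ` V \<subseteq> V" unfolding V_def using hF gS[OF h] by simp
    show "inj_on h V" using injg[OF h] inj_on_subset by blast
  qed
  define b where "b = (\<Sum>v\<in>V. v)"
  have "(\<Sum>v\<in>V. (1 / real (card V)) *\<^sub>R v) \<in> F"
  proof (rule convex_sum[OF finV face_of_imp_convex[OF facet_of_imp_face_of[OF F]]])
    have "card V > 0" using finV V0 card_gt_0_iff by blast
    then show "(\<Sum>i\<in>V. 1 / real (card V)) = 1" by simp
    show "\<And>i. i \<in> V \<Longrightarrow> 0 \<le> 1 / real (card V)" by simp
    show "\<And>i. i \<in> V \<Longrightarrow> i \<in> F" using V_def by blast
  qed
  then have "(1 / real (card V)) *\<^sub>R b \<in> frontier P"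
    using facet_front[OF F] b_def by (auto simp: scaleR_sum_right)
  then have "(1 / real (card V)) *\<^sub>R b \<noteq> 0" using front_ne0 by blast
  then have "b \<noteq> 0" by auto
  have hb: "h b = b"
  proof -
    have "h b = (\<Sum>v\<in>V. h v)" using linear_sum[OF lin[OF h]] b_def by simp
    also have "\<dots> = (\<Sum>w\<in>h ` V. w)"
    proof -
      have ij: "inj_on h V" using injg[OF h] inj_on_subset by blast
      show ?thesis using sum.reindex[OF ij, of "\<lambda>w. w"] by simp
    qed
    finally show ?thesis using hV b_def by simp
  qed
  have "h (phi b) = phi b" using phi_comm[OF h, of b] hb by simp
  moreover have "phi b \<in> sphere 0 1" using \<open>b \<noteq> 0\<close> by (simp add: phi_def)
  ultimately show ?thesis using freeG h by blast
qed

lemma dim1_trans: assumes d: "DIM('a) = 1" and p: "p \<in> frontier P" and q: "q \<in> frontier P"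
  shows "\<exists>g\<in>G. q = g p"
proof -
  obtain b where B: "Basis = {b::'a}" using card_1_singletonE[OF d] by blast
  have bB: "b \<in> Basis" unfolding B by simp
  have sph: "x = b \<or> x = -b" if "x \<in> sphere 0 1" for x :: 'a
  proof -
    have x: "x = (x \<bullet> b) *\<^sub>R b" using euclidean_representation[of x] unfolding B by simp
    then have "norm x = \<bar>x \<bullet> b\<bar>" using norm_Basis[OF bB] by (metis norm_scaleR mult.right_neutral)
    then have "\<bar>x \<bullet> b\<bar> = 1" using that by simp
    then have "x \<bullet> b = 1 \<or> x \<bullet> b = -1" by linarith
    then show ?thesis using x by auto
  qed
  obtain g where g: "g \<in> G" "g \<noteq> id" using nontriv by blast
  have bs: "b \<in> sphere 0 1" using norm_Basis[OF bB] by simp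
  have "g b \<in> sphere 0 1" using normg[OF g(1)] bs by simp
  moreover have "g b \<noteq> b" using freeG g bs by blast
  ultimately have gb: "g b = -b" using sph by blast
  have gnb: "g (-b) = b" using gb linear_neg[OF lin[OF g(1)]] by simp
  have sw: "w = u \<or> w = g u" if "u \<in> sphere 0 1" "w \<in> sphere 0 1" for u w
    using sph[OF that(1)] sph[OF that(2)] gb gnb by auto
  have "phi p \<in> sphere 0 1" "phi q \<in> sphere 0 1" using phi_surj p q by auto
  then have "phi q = phi p \<or> phi q = g (phi p)" using sw by blast
  moreover have "g p \<in> frontier P" using front_img[OF g(1)] p by blast
  ultimately have "q = p \<or> q = g p"
    using phi_comm[OF g(1), of p] phi_inj p q by (metis inj_on_def)
  then show ?thesis using idG g by (metis id_apply)
qed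

lemma conn: assumes Oo: "closed Oo" and Nn: "closed Nn" and U: "Oo \<union> Nn = frontier P"
  and Oo0: "Oo \<noteq> {}" and Nn0: "Nn \<noteq> {}" and inv: "\<forall>g\<in>G. g ` Oo \<subseteq> Oo"
  shows "Oo \<inter> Nn \<noteq> {}"
proof (cases "DIM('a) = 1")
  case True
  obtain p q where "p \<in> Oo" "q \<in> Nn" using Oo0 Nn0 by blast
  then obtain g where "g \<in> G" "q = g p" using dim1_trans[OF True] U by blast
  then show ?thesis using inv \<open>p \<in> Oo\<close> \<open>q \<in> Nn\<close> by blast
next
  case False
  have "aff_dim P \<noteq> 1" using affdimP False by simp
  then have "connected (rel_frontier P)"
    using connected_sphere_gen[OF convP] compP compact_imp_bounded by blast
  then have c: "connected (frontier P)" using rel_frontier_frontier[OF affP] by simp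
  show ?thesis
  proof
    assume "Oo \<inter> Nn = {}"
    then show False using c Oo Nn U Oo0 Nn0 unfolding connected_closed by blast
  qed
qed

end


context orb begin

definition "Fac = {F. F facet_of P}"
definition "rep R F \<longleftrightarrow> (\<exists>F'\<in>R. \<exists>g\<in>G. F = g ` F')"
definition "good R \<longleftrightarrow> R \<subseteq> Fac \<and> connected (\<Union>R) \<and> (\<forall>F1\<in>R. \<forall>F2\<in>R. \<forall>g\<in>G. F1 = g ` F2 \<longrightarrow> F1 = F2)"

lemma finFac: "finite Fac"
  unfolding Fac_def using finite_polytope_facets[OF polyP] .

lemma facet_conn: "F facet_of P \<Longrightarrow> connected F"
  by (rule convex_connected[OF face_of_imp_convex[OF facet_of_imp_face_of]])

lemma img_back: assumes "k \<circ> g = id" shows "k ` (g ` X) = X"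
proof -
  have "k ` (g ` X) = (k \<circ> g) ` X" by (rule image_comp)
  then show ?thesis using assms by simp
qed

lemma rep_orbit: assumes g: "g \<in> G" and nr: "\<not> rep R F" shows "\<not> rep R (g ` F)"
proof
  assume "rep R (g ` F)"
  then obtain F3 h where F3: "F3 \<in> R" "h \<in> G" "g ` F = h ` F3" unfolding rep_def by blast
  obtain k where k: "k \<in> G" "g \<circ> k = id" "k \<circ> g = id" using ginv g by blast
  have "F = k ` (g ` F)" using img_back[OF k(3)] by simp
  also have "\<dots> = (k \<circ> h) ` F3" using F3(3) by (simp add: image_comp)
  finally have "F = (k \<circ> h) ` F3" .
  moreover have "k \<circ> h \<in> G" using compG k F3 by blast
  ultimately show False using nr F3(1) unfolding rep_def by blast
qed

lemma extend: assumes gR: "good R" and F0: "F0 \<in> Fac" and nr: "\<not> rep R F0"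
  shows "\<exists>F''. F'' \<in> Fac \<and> F'' \<notin> R \<and> good (insert F'' R)"
proof (cases "R = {}")
  case True
  have "connected F0" using F0 unfolding Fac_def
    by (simp add: facet_conn)
  then have "good {F0}" using F0 unfolding good_def by simp
  then show ?thesis using F0 True by blast
next
  case False
  have RF: "R \<subseteq> Fac" using gR good_def by blast
  have finR: "finite R" using finite_subset[OF RF finFac] .
  have facR: "\<And>g F. g \<in> G \<Longrightarrow> F \<in> R \<Longrightarrow> g ` F facet_of P"
    using facet_img RF unfolding Fac_def by blast
  define Oo where "Oo = {y. \<exists>g\<in>G. \<exists>F\<in>R. y \<in> g ` F}"
  define Nn where "Nn = {y. \<exists>F\<in>Fac. \<not> rep R F \<and> y \<in> F}"
  have cO: "closed Oo"
  proof -
    have e: "Oo = \<Union>((\<lambda>(g,F). g ` F) ` (G \<times> R))" unfolding Oo_def by auto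
    have "finite ((\<lambda>(g,F). g ` F) ` (G \<times> R))" using finG finR by simp
    moreover have "\<forall>T\<in>(\<lambda>(g,F). g ` F) ` (G \<times> R). closed T"
    proof
      fix T assume "T \<in> (\<lambda>(g,F). g ` F) ` (G \<times> R)"
      then obtain g F where "g \<in> G" "F \<in> R" "T = g ` F" by blast
      then show "closed T" using facR facet_compact compact_imp_closed by blast
    qed
    ultimately show ?thesis unfolding e by (rule closed_Union)
  qed
  have cN: "closed Nn"
  proof -
    have e: "Nn = \<Union>{F\<in>Fac. \<not> rep R F}" unfolding Nn_def by auto
    have "finite {F\<in>Fac. \<not> rep R F}" using finFac by simp
    moreover have "\<forall>T\<in>{F\<in>Fac. \<not> rep R F}. closed T"
      using facet_compact compact_imp_closed unfolding Fac_def by blast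
    ultimately show ?thesis unfolding e by (rule closed_Union)
  qed
  have U: "Oo \<union> Nn = frontier P"
  proof
    show "Oo \<union> Nn \<subseteq> frontier P"
    proof
      fix x assume "x \<in> Oo \<union> Nn"
      then obtain F where "F facet_of P" "x \<in> F"
        unfolding Oo_def Nn_def Fac_def using facR by blast
      then show "x \<in> frontier P" using facet_front by blast
    qed
    show "frontier P \<subseteq> Oo \<union> Nn"
    proof
      fix x assume "x \<in> frontier P"
      then have "x \<in> \<Union> {F. F facet_of P}" using frontP by simp
      then obtain F where F: "F facet_of P" "x \<in> F" by blast
      show "x \<in> Oo \<union> Nn"
      proof (cases "rep R F")
        case True
        then obtain F' g where "F' \<in> R" "g \<in> G" "F = g ` F'" unfolding rep_def by blast
        then have "x \<in> Oo" unfolding Oo_def using F by blast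
        then show ?thesis by blast
      next
        case False
        then have "x \<in> Nn" unfolding Nn_def Fac_def using F by blast
        then show ?thesis by blast
      qed
    qed
  qed
  have "\<exists>F1. F1 \<in> R" using False by (simp add: ex_in_conv)
  then obtain F1 where F1: "F1 \<in> R" ..
  have "F1 facet_of P" using F1 RF unfolding Fac_def by blast
  then have "F1 \<noteq> {}" by (simp add: facet_of_def)
  then obtain z where "z \<in> F1" by blast
  then have "z \<in> id ` F1" by simp
  then have "z \<in> Oo" unfolding Oo_def using F1 idG by blast
  then have O0: "Oo \<noteq> {}" by blast
  have "F0 facet_of P" using F0 unfolding Fac_def by blast
  then have "F0 \<noteq> {}" by (simp add: facet_of_def)
  then obtain z' where "z' \<in> F0" by blast
  then have "z' \<in> Nn" unfolding Nn_def using F0 nr by blast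
  then have N0: "Nn \<noteq> {}" by blast
  have inv: "\<forall>g\<in>G. g ` Oo \<subseteq> Oo"
  proof (intro ballI subsetI)
    fix g y assume g: "g \<in> G" and "y \<in> g ` Oo"
    then obtain x where x: "x \<in> Oo" "y = g x" by blast
    then obtain h F where h: "h \<in> G" "F \<in> R" "x \<in> h ` F" unfolding Oo_def by blast
    then obtain w where w: "w \<in> F" "x = h w" by blast
    then have "y = (g \<circ> h) w" using x by simp
    then have "y \<in> (g \<circ> h) ` F" using w by blast
    moreover have "g \<circ> h \<in> G" using compG g h by blast
    ultimately show "y \<in> Oo" unfolding Oo_def using h by blast
  qed
  have "Oo \<inter> Nn \<noteq> {}" using conn[OF cO cN U O0 N0 inv] .
  then obtain y where "y \<in> Oo" "y \<in> Nn" by blast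
  then obtain g F' F1 where g: "g \<in> G" and F': "F' \<in> R" "y \<in> g ` F'"
    and F1: "F1 \<in> Fac" "\<not> rep R F1" "y \<in> F1" unfolding Oo_def Nn_def by blast
  obtain k where k: "k \<in> G" "g \<circ> k = id" "k \<circ> g = id" using ginv g by blast
  define F'' where "F'' = k ` F1"
  have F''f: "F'' \<in> Fac" using facet_img[OF k(1)] F1 unfolding F''_def Fac_def by blast
  have F''r: "\<not> rep R F''" using rep_orbit[OF k(1) F1(2)] F''_def by simp
  obtain x where x: "x \<in> F'" "y = g x" using F' by blast
  have "k y = (k \<circ> g) x" using x by simp
  then have "k y = x" using k(3) by simp
  then have "x \<in> F''" unfolding F''_def using F1 by blast
  then have int: "F'' \<inter> \<Union>R \<noteq> {}" using x F' by blast
  have F''n: "F'' \<notin> R"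
  proof
    assume "F'' \<in> R"
    moreover have "F'' = id ` F''" by simp
    ultimately have "rep R F''" unfolding rep_def using idG by blast
    then show False using F''r by blast
  qed
  have "good (insert F'' R)"
    unfolding good_def
  proof (intro conjI)
    show "insert F'' R \<subseteq> Fac" using F''f RF by blast
    have "connected F''" using F''f unfolding Fac_def
      by (simp add: facet_conn)
    moreover have "connected (\<Union>R)" using gR good_def by blast
    ultimately have "connected (F'' \<union> \<Union>R)" using connected_Un int by blast
    then show "connected (\<Union>(insert F'' R))" by simp
    show "\<forall>F1\<in>insert F'' R. \<forall>F2\<in>insert F'' R. \<forall>g\<in>G. F1 = g ` F2 \<longrightarrow> F1 = F2"
    proof (intro ballI impI)
      fix A B h assume A: "A \<in> insert F'' R" and B: "B \<in> insert F'' R" and h: "h \<in> G" and e: "A = h ` B"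
      show "A = B"
      proof (cases "A = F''")
        case True
        show ?thesis
        proof (cases "B = F''")
          case True with \<open>A = F''\<close> show ?thesis by simp
        next
          case False
          then have "B \<in> R" using B by simp
          then have "rep R F''" using e h \<open>A = F''\<close> unfolding rep_def by blast
          then show ?thesis using F''r by blast
        qed
      next
        case Af: False
        then have AR: "A \<in> R" using A by simp
        show ?thesis
        proof (cases "B = F''")
          case True
          obtain k' where k': "k' \<in> G" "h \<circ> k' = id" "k' \<circ> h = id" using ginv h by blast
          have "F'' = k' ` A" using img_back[OF k'(3)] e True by simp
          then have "rep R F''" using AR k' unfolding rep_def by blast
          then show ?thesis using F''r by blast
        next
          case False
          then have "B \<in> R" using B by simp
          then show ?thesis using gR AR h e unfolding good_def by blast
        qed
      qed
    qed
  qed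
  then show ?thesis using F''f F''n by blast
qed

lemma exists_full: "\<exists>R. good R \<and> (\<forall>F\<in>Fac. rep R F)"
proof -
  define C where "C = {R. good R}"
  have finC: "finite C"
  proof (rule finite_subset)
    show "C \<subseteq> Pow Fac" unfolding C_def good_def by blast
    show "finite (Pow Fac)" using finFac by simp
  qed
  have "good {}" unfolding good_def by simp
  then have C0: "{} \<in> C" unfolding C_def by simp
  define m where "m = Max (card ` C)"
  have "m \<in> card ` C" unfolding m_def using finC C0 by (intro Max_in) auto
  then obtain R where R: "R \<in> C" "card R = m" by blast
  have mx: "\<And>R'. R' \<in> C \<Longrightarrow> card R' \<le> m" unfolding m_def using finC by simp
  have gR: "good R" using R C_def by simp
  have finR: "finite R" using gR finite_subset[OF _ finFac] unfolding good_def by blast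
  have "\<forall>F\<in>Fac. rep R F"
  proof (rule ccontr)
    assume "\<not> ?thesis"
    then obtain F0 where "F0 \<in> Fac" "\<not> rep R F0" by blast
    then obtain F'' where F'': "F'' \<notin> R" "good (insert F'' R)" using extend[OF gR] by blast
    have "card (insert F'' R) = card R + 1" using F'' finR by simp
    moreover have "card (insert F'' R) \<le> m" using mx F''(2) unfolding C_def by simp
    ultimately show False using R by simp
  qed
  then show ?thesis using gR by blast
qed

end


context orb begin

lemma goodF: "good R \<Longrightarrow> F \<in> R \<Longrightarrow> F facet_of P"
  unfolding good_def Fac_def by blast
lemma goodC: "good R \<Longrightarrow> connected (\<Union>R)"
  unfolding good_def by blast
lemma goodU: "good R \<Longrightarrow> F1 \<in> R \<Longrightarrow> F2 \<in> R \<Longrightarrow> g \<in> G \<Longrightarrow> F1 = g ` F2 \<Longrightarrow> F1 = F2"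
  unfolding good_def by blast
lemma goodS: "good R \<Longrightarrow> R \<subseteq> Fac"
  unfolding good_def by blast

lemma same_img: assumes g: "g \<in> G" and g': "g' \<in> G" and gR: "good R"
  and F2: "F2 \<in> R" and F3: "F3 \<in> R" and e: "g ` F2 = g' ` F3" shows "g = g'"
proof -
  obtain k where k: "k \<in> G" "g' \<circ> k = id" "k \<circ> g' = id" using ginv g' by blast
  have "F3 = k ` (g' ` F3)" using img_back[OF k(3)] by simp
  also have "\<dots> = k ` (g ` F2)" using e by simp
  also have "\<dots> = (k \<circ> g) ` F2" by (simp add: image_comp)
  finally have e2: "F3 = (k \<circ> g) ` F2" .
  have kg: "k \<circ> g \<in> G" using compG k g by blast
  have "F3 = F2" by (rule goodU[OF gR F3 F2 kg e2])
  then have "(k \<circ> g) ` F2 = F2" using e2 by simp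
  moreover have "F2 facet_of P" by (rule goodF[OF gR F2])
  ultimately have "k \<circ> g = id" using facet_free[OF kg] by blast
  then have "g' \<circ> (k \<circ> g) = g'" by simp
  then have "(g' \<circ> k) \<circ> g = g'" by (simp add: o_assoc)
  then show ?thesis using k(2) by simp
qed

lemma int_empty: assumes gR: "good R" and g: "g \<in> G" and g': "g' \<in> G" and ne: "g \<noteq> g'"
  shows "(top_of_set (frontier P)) interior_of (g ` \<Union>R \<inter> g' ` \<Union>R) = {}"
  unfolding interior_of_eq_empty
proof (intro allI impI)
  fix T assume T: "openin (top_of_set (frontier P)) T \<and> T \<subseteq> g ` \<Union>R \<inter> g' ` \<Union>R"
  show "T = {}"
  proof (rule ccontr)
    assume "T \<noteq> {}"
    then obtain y where y: "y \<in> T" by blast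
    have "\<exists>W. open W \<and> T = frontier P \<inter> W" using T by (simp add: openin_open)
    then obtain W where W: "open W" "T = frontier P \<inter> W" by blast
    have "y \<in> g ` \<Union>R" using T y by blast
    then obtain F1 x where F1: "F1 \<in> R" "x \<in> F1" "y = g x" by blast
    define A where "A = g ` F1"
    have Af: "A facet_of P" unfolding A_def by (rule facet_img[OF g goodF[OF gR F1(1)]])
    have "y \<in> A" unfolding A_def using F1 by blast
    moreover have "closure (rel_interior A) = closure A"
      using convex_closure_rel_interior face_of_imp_convex[OF facet_of_imp_face_of[OF Af]] by blast
    ultimately have "y \<in> closure (rel_interior A)" using closure_subset by blast
    then have "W \<inter> closure (rel_interior A) \<noteq> {}" using W y by blast
    then have "W \<inter> rel_interior A \<noteq> {}" using open_Int_closure_eq_empty[OF W(1)] by blast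
    then obtain z where z: "z \<in> W" "z \<in> rel_interior A" by blast
    have "z \<in> A" using z rel_interior_subset by blast
    then have "z \<in> frontier P" using facet_front[OF Af] by blast
    then have "z \<in> T" using W z by blast
    then have "z \<in> g ` \<Union>R" "z \<in> g' ` \<Union>R" using T by blast+
    then obtain F2 F3 where F2: "F2 \<in> R" "z \<in> g ` F2" and F3: "F3 \<in> R" "z \<in> g' ` F3" by blast
    have f2: "g ` F2 facet_of P" by (rule facet_img[OF g goodF[OF gR F2(1)]])
    have f3: "g' ` F3 facet_of P" by (rule facet_img[OF g' goodF[OF gR F3(1)]])
    have "g ` F2 = A" using facet_eq[OF f2 Af] F2 z by blast
    moreover have "g' ` F3 = A" using facet_eq[OF f3 Af] F3 z by blast
    ultimately have "g = g'" using same_img[OF g g' gR F2(1) F3(1)] by simp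
    then show False using ne by simp
  qed
qed

lemma contphi: "continuous_on (frontier P) phi"
  unfolding phi_def by (intro continuous_intros) (auto dest: front_ne0)

lemma main: assumes gR: "good R" and full: "\<forall>F\<in>Fac. rep R F"
  shows "facet_orbit_representatives G P R \<and> fundamental_domain G (frontier P) (\<Union>R)
     \<and> fundamental_domain G (sphere 0 1) (phi ` \<Union>R)"
proof -
  have RF: "R \<subseteq> Fac" by (rule goodS[OF gR])
  have finR: "finite R" using finite_subset[OF RF finFac] .
  have facR: "\<And>F. F \<in> R \<Longrightarrow> F facet_of P" using RF unfolding Fac_def by blast
  define D where "D = \<Union>R"
  have Dfront: "D \<subseteq> frontier P" unfolding D_def
  proof (rule Union_least)
    fix F assume "F \<in> R" then show "F \<subseteq> frontier P" by (rule facet_front[OF facR])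
  qed
  have cD: "compact D" unfolding D_def by (rule compact_Union[OF finR]) (rule facet_compact[OF facR])
  have conD: "connected D" unfolding D_def by (rule goodC[OF gR])
  have gD: "g ` D \<subseteq> frontier P" if g: "g \<in> G" for g
  proof -
    have "g ` D \<subseteq> g ` frontier P" using Dfront by (rule image_mono)
    then show ?thesis using front_img[OF g] by (rule order_trans)
  qed
  have cover: "frontier P = (\<Union>g\<in>G. g ` D)"
  proof
    show "frontier P \<subseteq> (\<Union>g\<in>G. g ` D)"
    proof
      fix x assume "x \<in> frontier P"
      then have "x \<in> \<Union> {F. F facet_of P}" using frontP by simp
      then obtain F where F: "F facet_of P" "x \<in> F" by blast
      then have "rep R F" using full unfolding Fac_def by blast
      then obtain F' g where "F' \<in> R" "g \<in> G" "F = g ` F'" unfolding rep_def by blast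
      then show "x \<in> (\<Union>g\<in>G. g ` D)" using F unfolding D_def by blast
    qed
    show "(\<Union>g\<in>G. g ` D) \<subseteq> frontier P" using gD by blast
  qed
  have P1: "facet_orbit_representatives G P R"
    unfolding facet_orbit_representatives_def
  proof (intro conjI allI impI)
    show "\<forall>F\<in>R. F facet_of P" using facR by blast
    fix F assume F: "F facet_of P"
    then have "rep R F" using full unfolding Fac_def by blast
    then obtain F' g where F': "F' \<in> R" "g \<in> G" "F = g ` F'" unfolding rep_def by blast
    show "\<exists>!F'. F' \<in> R \<and> (\<exists>g\<in>G. F = g ` F')"
    proof (rule ex1I)
      show "F' \<in> R \<and> (\<exists>g\<in>G. F = g ` F')" using F' by blast
      fix F2 assume "F2 \<in> R \<and> (\<exists>g\<in>G. F = g ` F2)"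
      then obtain g2 where F2: "F2 \<in> R" "g2 \<in> G" "F = g2 ` F2" by blast
      obtain k where k: "k \<in> G" "g2 \<circ> k = id" "k \<circ> g2 = id" using ginv F2(2) by blast
      have "F2 = k ` (g2 ` F2)" using img_back[OF k(3)] by simp
      also have "\<dots> = k ` (g ` F')" using F2(3) F'(3) by simp
      also have "\<dots> = (k \<circ> g) ` F'" by (simp add: image_comp)
      finally have e: "F2 = (k \<circ> g) ` F'" .
      have "k \<circ> g \<in> G" using compG k F' by blast
      then show "F2 = F'" using goodU[OF gR F2(1) F'(1) _ e] by blast
    qed
  qed
  have P2: "fundamental_domain G (frontier P) D"
    unfolding fundamental_domain_def
  proof (intro conjI ballI impI)
    show "D \<subseteq> frontier P" by (rule Dfront)
    show "connected D" by (rule conD)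
    show "closedin (top_of_set (frontier P)) D" using closed_subset[OF Dfront compact_imp_closed[OF cD]] .
    show "frontier P = (\<Union>g\<in>G. g ` D)" by (rule cover)
    fix g g' assume "g \<in> G" "g' \<in> G" "g \<noteq> g'"
    then show "top_of_set (frontier P) interior_of (g ` D \<inter> g' ` D) = {}"
      using int_empty[OF gR] unfolding D_def by blast
  qed
  obtain psi where hom: "homeomorphism (frontier P) (sphere 0 1) phi psi"
    using homeomorphism_compact[OF compact_frontier[OF compP] contphi phi_surj phi_inj] by blast
  have comm: "\<And>g X. g \<in> G \<Longrightarrow> g ` (phi ` X) = phi ` (g ` X)"
  proof -
    fix g X assume g: "g \<in> G"
    have "g ` (phi ` X) = (g \<circ> phi) ` X" by (simp add: image_comp)
    also have "\<dots> = (phi \<circ> g) ` X" using phi_comm[OF g] by (intro image_cong) auto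
    also have "\<dots> = phi ` (g ` X)" by (simp add: image_comp)
    finally show "g ` (phi ` X) = phi ` (g ` X)" .
  qed
  have P3: "fundamental_domain G (sphere 0 1) (phi ` D)"
    unfolding fundamental_domain_def
  proof (intro conjI ballI impI)
    show "phi ` D \<subseteq> sphere 0 1" using Dfront phi_surj by blast
    show "connected (phi ` D)"
      using connected_continuous_image[OF continuous_on_subset[OF contphi Dfront] conD] .
    have "compact (phi ` D)"
      using compact_continuous_image[OF continuous_on_subset[OF contphi Dfront] cD] .
    then show "closedin (top_of_set (sphere 0 1)) (phi ` D)"
      using closed_subset[OF \<open>phi ` D \<subseteq> sphere 0 1\<close> compact_imp_closed] by blast
    have "sphere 0 1 = phi ` frontier P" using phi_surj by simp
    also have "\<dots> = phi ` (\<Union>g\<in>G. g ` D)" using cover by simp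
    also have "\<dots> = (\<Union>g\<in>G. phi ` (g ` D))" by (rule image_UN)
    also have "\<dots> = (\<Union>g\<in>G. g ` (phi ` D))" using comm by simp
    finally show "sphere 0 1 = (\<Union>g\<in>G. g ` (phi ` D))" .
    fix g g' assume g: "g \<in> G" and g': "g' \<in> G" and ne: "g \<noteq> g'"
    define X where "X = g ` D \<inter> g' ` D"
    have XF: "X \<subseteq> frontier P" unfolding X_def using gD g by blast
    have eX: "g ` (phi ` D) \<inter> g' ` (phi ` D) = phi ` X"
      unfolding X_def comm[OF g] comm[OF g']
      by (rule inj_on_image_Int[OF phi_inj gD[OF g] gD[OF g'], symmetric])
    have iX: "top_of_set (frontier P) interior_of X = {}"
      using int_empty[OF gR g g' ne] unfolding X_def D_def .
    show "top_of_set (sphere 0 1) interior_of (g ` (phi ` D) \<inter> g' ` (phi ` D)) = {}"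
      unfolding eX interior_of_eq_empty
    proof (intro allI impI)
      fix T assume T: "openin (top_of_set (sphere 0 1)) T \<and> T \<subseteq> phi ` X"
      have o: "openin (top_of_set (frontier P)) (psi ` T)"
        using homeomorphism_imp_open_map[OF homeomorphism_symD[OF hom]] T by blast
      have "psi ` T \<subseteq> X"
      proof
        fix s assume "s \<in> psi ` T"
        then obtain t where t: "t \<in> T" "s = psi t" by blast
        then obtain x where x: "x \<in> X" "t = phi x" using T by blast
        then have "psi t = x" using homeomorphism_apply1[OF hom] XF by blast
        then show "s \<in> X" using t x by simp
      qed
      then have "psi ` T = {}" using iX o unfolding interior_of_eq_empty by blast
      then show "T = {}" by simp
    qed
  qed
  show ?thesis using P1 P2 P3 unfolding D_def by blast
qed

lemma main_ex: "\<exists>R. facet_orbit_representatives G P R \<and> fundamental_domain G (frontier P) (\<Union>R)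
     \<and> fundamental_domain G (sphere 0 1) (phi ` \<Union>R)"
  using exists_full main by blast

end

theorem theorem6p4:
  fixes G :: "('a::euclidean_space \<Rightarrow> 'a) set" and v0 :: 'a
  assumes "finite G"
    and "id \<in> G"
    and "\<forall>g\<in>G. \<forall>h\<in>G. g \<circ> h \<in> G"
    and "\<forall>g\<in>G. \<exists>h\<in>G. g \<circ> h = id \<and> h \<circ> g = id"
    and "\<forall>g\<in>G. orthogonal_transformation g"
    and "\<forall>g\<in>G. \<forall>x\<in>sphere 0 1. g x = x \<longrightarrow> g = id"
    and "v0 \<in> sphere 0 1"
    and "affine hull ((\<lambda>g. g v0) ` G) = UNIV"
  shows "\<exists>R. facet_orbit_representatives G (convex hull ((\<lambda>g. g v0) ` G)) R \<and>
             fundamental_domain G (frontier (convex hull ((\<lambda>g. g v0) ` G))) (\<Union>R) \<and>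
             fundamental_domain G (sphere 0 1) ((\<lambda>x. x /\<^sub>R norm x) ` (\<Union>R))"
proof -
  have o: "orb G v0" unfolding orb_def using assms by blast
  interpret orb G v0 by (rule o)
  show ?thesis using main_ex unfolding P_def S_def phi_def .
qed


end
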